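(* Let $X$ be a random variable with a log-concave density such that $\Pr[X\ge0]>0$ and $\Pr[X\le0]>0$. Then $$\max\big\{\mathbb E[|X|\mid X\le0],\ \mathbb E[|X|\mid X\ge0]\big\}\le\frac{1}{\ln2}\mathbb E[|X|].$$
   Context: A nonnegative function $f$ on $\mathbb R$ is log-concave if $f(\lambda x+(1-\lambda)y)\ge f(x)^\lambda f(y)^{1-\lambda}$ for all $0\le\lambda\le1$ and $x,y\in\mathbb R$. *)

theory Defs
  imports "HOL-Probability.Probability"
begin

definition log_concave :: "(real \<Rightarrow> real) \<Rightarrow> bool" where
  "log_concave f \<longleftrightarrow> (\<forall>x. f x \<ge> 0) \<and>
     (\<forall>t x y. 0 \<le> t \<and> t \<le> 1 \<longrightarrow>
        f (t * x + (1 - t) * y) \<ge> f x powr t * f y powr (1 - t))"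

end

theory Submission imports Defs "HOL-Real_Asymp.Real_Asymp" begin

lemma lc_nonneg: "log_concave f \<Longrightarrow> 0 \<le> f x"
  unfolding log_concave_def by blast

lemma lc_ineq: "log_concave f \<Longrightarrow> 0 \<le> t \<Longrightarrow> t \<le> 1 \<Longrightarrow>
   f (t * x + (1 - t) * y) \<ge> f x powr t * f y powr (1 - t)"
  unfolding log_concave_def by blast

lemma lc_pair:
  assumes lc: "log_concave f" and t: "0 \<le> t" and u: "0 \<le> u"
  shows "f 0 * f (t + u) \<le> f t * f u"
proof (cases "t + u = 0")
  case True then have "t = 0" "u = 0" using t u by auto
  then show ?thesis by simp
next
  case False
  then have tu: "t + u > 0" using t u by auto
  define a where "a = u / (t + u)"
  have a0: "0 \<le> a" "a \<le> 1" using t u tu by (auto simp: a_def field_simps)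
  have e1: "a * 0 + (1 - a) * (t+u) = t" using tu by (simp add: a_def field_simps)
  have e2: "(1 - a) * 0 + (1 - (1 - a)) * (t+u) = u" using tu by (simp add: a_def field_simps)
  have 1: "f t \<ge> f 0 powr a * f (t+u) powr (1 - a)"
    using lc_ineq[OF lc a0, of 0 "t+u"] unfolding e1 .
  have 2: "f u \<ge> f 0 powr (1 - a) * f (t+u) powr (1 - (1 - a))"
    using lc_ineq[OF lc, of "1 - a" 0 "t+u"] a0 unfolding e2 by simp
  have "f 0 * f (t + u) = (f 0 powr a * f (t+u) powr (1 - a)) * (f 0 powr (1 - a) * f (t+u) powr a)"
  proof -
    have "(f 0 powr a * f (t+u) powr (1 - a)) * (f 0 powr (1 - a) * f (t+u) powr a)
       = (f 0 powr a * f 0 powr (1 - a)) * (f (t+u) powr a * f (t+u) powr (1 - a))"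
      by (simp add: algebra_simps)
    also have "\<dots> = f 0 powr 1 * f (t+u) powr 1" by (simp add: powr_add[symmetric])
    also have "\<dots> = f 0 * f (t + u)" using lc_nonneg[OF lc] by simp
    finally show ?thesis by simp
  qed
  also have "\<dots> \<le> f t * f u"
    using 1 2 lc_nonneg[OF lc] by (intro mult_mono) auto
  finally show ?thesis .
qed

lemma LA:
  assumes lc: "log_concave f" and fm[measurable]: "f \<in> borel_measurable borel"
  shows "ennreal (f 0) * (\<integral>\<^sup>+x. ennreal (f x * x * indicator {0..} x) \<partial>lborel)
     \<le> (\<integral>\<^sup>+x. ennreal (f x * indicator {0..} x) \<partial>lborel) * (\<integral>\<^sup>+x. ennreal (f x * indicator {0..} x) \<partial>lborel)"
proof -
  note nn = lc_nonneg[OF lc]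
  define P where "P = (\<integral>\<^sup>+x. ennreal (f x * indicator {0..} x) \<partial>lborel)"
  have "(\<integral>\<^sup>+x. ennreal (f x * x * indicator {0..} x) \<partial>lborel)
      = (\<integral>\<^sup>+x. \<integral>\<^sup>+t. ennreal (f x * indicator {0..} x * indicator {0..x} t) \<partial>lborel \<partial>lborel)"
  proof (rule nn_integral_cong)
    fix x :: real
    have "(\<integral>\<^sup>+t. ennreal (f x * indicator {0..} x * indicator {0..x} t) \<partial>lborel)
        = (\<integral>\<^sup>+t. ennreal (f x * indicator {0..} x) * indicator {0..x} t \<partial>lborel)"
      by (intro nn_integral_cong) (auto simp: indicator_def)
    also have "\<dots> = ennreal (f x * indicator {0..} x) * emeasure lborel {0..x}"
      by (simp add: nn_integral_cmult_indicator)
    also have "\<dots> = ennreal (f x * x * indicator {0..} x)"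
      using nn[of x] by (auto simp: indicator_def ennreal_mult[symmetric])
    finally show "ennreal (f x * x * indicator {0..} x) = (\<integral>\<^sup>+t. ennreal (f x * indicator {0..} x * indicator {0..x} t) \<partial>lborel)" ..
  qed
  also have "\<dots> = (\<integral>\<^sup>+t. \<integral>\<^sup>+x. ennreal (f x * indicator {0..} x * indicator {0..x} t) \<partial>lborel \<partial>lborel)"
    by (subst lborel_pair.Fubini')
       (auto simp: case_prod_unfold indicator_def cong: measurable_cong_sets)
  also have "\<dots> = (\<integral>\<^sup>+t. ennreal (indicator {0..} t) * (\<integral>\<^sup>+u. ennreal (f (t + u) * indicator {0..} u) \<partial>lborel) \<partial>lborel)"
  proof (rule nn_integral_cong)
    fix t :: real
    show "(\<integral>\<^sup>+x. ennreal (f x * indicator {0..} x * indicator {0..x} t) \<partial>lborel) =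
       ennreal (indicator {0..} t) * (\<integral>\<^sup>+u. ennreal (f (t + u) * indicator {0..} u) \<partial>lborel)"
    proof (cases "t \<ge> 0")
      case True
      have "(\<integral>\<^sup>+x. ennreal (f x * indicator {0..} x * indicator {0..x} t) \<partial>lborel)
          = (\<integral>\<^sup>+x. ennreal (f x * indicator {t..} x) \<partial>lborel)"
        using True by (intro nn_integral_cong) (auto simp: indicator_def)
      also have "\<dots> = (\<integral>\<^sup>+x. ennreal (f x * indicator {t..} x) \<partial>distr lborel borel ((+) t))"
        by (simp add: lborel_distr_plus)
      also have "\<dots> = (\<integral>\<^sup>+u. ennreal (f (t + u) * indicator {0..} u) \<partial>lborel)"
        by (subst nn_integral_distr) (auto intro!: nn_integral_cong simp: indicator_def)
      finally show ?thesis using True by simp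
    next
      case False
      then show ?thesis by (simp add: indicator_def)
    qed
  qed
  finally have eq: "(\<integral>\<^sup>+x. ennreal (f x * x * indicator {0..} x) \<partial>lborel)
     = (\<integral>\<^sup>+t. ennreal (indicator {0..} t) * (\<integral>\<^sup>+u. ennreal (f (t + u) * indicator {0..} u) \<partial>lborel) \<partial>lborel)" .
  have "ennreal (f 0) * (\<integral>\<^sup>+x. ennreal (f x * x * indicator {0..} x) \<partial>lborel)
     = (\<integral>\<^sup>+t. ennreal (f 0) * (ennreal (indicator {0..} t) * (\<integral>\<^sup>+u. ennreal (f (t + u) * indicator {0..} u) \<partial>lborel)) \<partial>lborel)"
    unfolding eq by (rule nn_integral_cmult[symmetric]) auto
  also have "\<dots> = (\<integral>\<^sup>+t. \<integral>\<^sup>+u. ennreal (f 0 * indicator {0..} t * (f (t + u) * indicator {0..} u)) \<partial>lborel \<partial>lborel)"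
  proof (rule nn_integral_cong)
    fix t :: real
    have "(\<integral>\<^sup>+u. ennreal (f 0 * indicator {0..} t * (f (t + u) * indicator {0..} u)) \<partial>lborel)
       = (\<integral>\<^sup>+u. ennreal (f 0 * indicator {0..} t) * ennreal (f (t + u) * indicator {0..} u) \<partial>lborel)"
      using nn by (intro nn_integral_cong) (simp add: ennreal_mult)
    also have "\<dots> = ennreal (f 0 * indicator {0..} t) * (\<integral>\<^sup>+u. ennreal (f (t + u) * indicator {0..} u) \<partial>lborel)"
      by (rule nn_integral_cmult) auto
    also have "\<dots> = ennreal (f 0) * (ennreal (indicator {0..} t) * (\<integral>\<^sup>+u. ennreal (f (t + u) * indicator {0..} u) \<partial>lborel))"
      using nn by (simp add: ennreal_mult mult.assoc)
    finally show "ennreal (f 0) * (ennreal (indicator {0..} t) * (\<integral>\<^sup>+u. ennreal (f (t + u) * indicator {0..} u) \<partial>lborel))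
      = (\<integral>\<^sup>+u. ennreal (f 0 * indicator {0..} t * (f (t + u) * indicator {0..} u)) \<partial>lborel)" ..
  qed
  also have "\<dots> \<le> (\<integral>\<^sup>+t. \<integral>\<^sup>+u. ennreal (f t * indicator {0..} t) * ennreal (f u * indicator {0..} u) \<partial>lborel \<partial>lborel)"
  proof (intro nn_integral_mono)
    fix t u :: real
    show "ennreal (f 0 * indicator {0..} t * (f (t + u) * indicator {0..} u)) \<le> ennreal (f t * indicator {0..} t) * ennreal (f u * indicator {0..} u)"
    proof (cases "t \<ge> 0 \<and> u \<ge> 0")
      case True
      then show ?thesis using lc_pair[OF lc, of t u] nn[of t] nn[of u] by (auto simp: indicator_def ennreal_mult[symmetric])
    next
      case False
      then show ?thesis by (auto simp: indicator_def)
    qed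
  qed
  also have "\<dots> = (\<integral>\<^sup>+t. ennreal (f t * indicator {0..} t) * P \<partial>lborel)"
    unfolding P_def by (intro nn_integral_cong nn_integral_cmult) auto
  also have "\<dots> = P * P"
    unfolding P_def by (rule nn_integral_multc) auto
  finally show ?thesis unfolding P_def .
qed

lemma LBy:
  assumes lc: "log_concave f" and c: "0 < f 0" and x: "x < 0" and fx: "0 < f x" and y: "0 \<le> y"
  shows "f y \<le> f 0 * exp (- (ln (f x / f 0) / (- x)) * y)"
proof (cases "f y = 0")
  case True then show ?thesis using c by simp
next
  case False
  then have fy: "0 < f y" using lc_nonneg[OF lc, of y] by simp
  define s where "s = - x"
  have s: "0 < s" using x by (simp add: s_def)
  define t where "t = y / (y + s)"
  have t: "0 \<le> t" "t \<le> 1" using s y by (auto simp: t_def field_simps)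
  have e: "t * x + (1 - t) * y = 0" using s y by (simp add: t_def s_def field_simps)
  have "f 0 \<ge> f x powr t * f y powr (1 - t)" using lc_ineq[OF lc t, of x y] unfolding e .
  then have "ln (f 0) \<ge> ln (f x powr t * f y powr (1 - t))"
    using fx fy c by (subst ln_le_cancel_iff) auto
  then have "ln (f 0) \<ge> t * ln (f x) + (1 - t) * ln (f y)"
    using fx fy by (simp add: ln_mult ln_powr)
  then have "(y + s) * ln (f 0) \<ge> (y + s) * (t * ln (f x) + (1 - t) * ln (f y))"
    using s y by (intro mult_left_mono) auto
  also have "(y + s) * (t * ln (f x) + (1 - t) * ln (f y)) = y * ln (f x) + s * ln (f y)"
  proof -
    have a: "(y + s) * t = y" using s y by (simp add: t_def)
    have b: "(y + s) * (1 - t) = s" using s y by (simp add: t_def field_simps)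
    show ?thesis by (simp add: distrib_left mult.assoc[symmetric] a b)
  qed
  finally have h: "y * ln (f x) + s * ln (f y) \<le> (y + s) * ln (f 0)" .
  have "ln (f y) \<le> ln (f 0) - (ln (f x / f 0) / s) * y"
  proof -
    have eq: "s * (ln (f 0) - (ln (f x / f 0) / s) * y) = s * ln (f 0) - y * (ln (f x) - ln (f 0))"
      using s fx c by (simp add: ln_div field_simps)
    have "s * ln (f y) \<le> s * (ln (f 0) - (ln (f x / f 0) / s) * y)"
      unfolding eq using h by (simp add: algebra_simps)
    then show ?thesis using s by simp
  qed
  then have "exp (ln (f y)) \<le> exp (ln (f 0) - (ln (f x / f 0) / s) * y)" by simp
  also have "ln (f 0) - (ln (f x / f 0) / s) * y = ln (f 0) + (- (ln (f x / f 0) / (- x)) * y)"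
    by (simp add: s_def)
  also have "exp \<dots> = f 0 * exp (- (ln (f x / f 0) / (- x)) * y)"
    unfolding exp_add using c by simp
  finally show ?thesis using fy by simp
qed

lemma exp_nn_integral:
  assumes k: "0 < k" and that: "0 \<le> C"
  shows "(\<integral>\<^sup>+y. ennreal (C * exp (- k * y)) * indicator {0..} y \<partial>lborel) = ennreal (C / k)"
proof -
  have "(\<integral>\<^sup>+y. ennreal (C * exp (- k * y)) * indicator {0..} y \<partial>lborel) = 0 - (- (C / k) * exp (- k * 0))"
  proof (rule nn_integral_FTC_atLeast)
    show "(\<lambda>y. C * exp (- k * y)) \<in> borel_measurable borel" by measurable
    fix y :: real
    show "DERIV (\<lambda>y. - (C / k) * exp (- k * y)) y :> C * exp (- k * y)"
      using k by (auto intro!: derivative_eq_intros simp: field_simps)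
    show "0 \<le> C * exp (- k * y)" using that by simp
  next
    show "((\<lambda>y. - (C / k) * exp (- k * y)) \<longlongrightarrow> 0) at_top"
      using k by real_asymp
  qed
  then show ?thesis by simp
qed

lemma LB1:
  assumes lc: "log_concave f" and fm[measurable]: "f \<in> borel_measurable borel" and c: "0 < f 0"
    and p: "0 < p" and P: "(\<integral>\<^sup>+x. ennreal (f x * indicator {0..} x) \<partial>lborel) = ennreal p"
    and x: "x \<le> 0"
  shows "f x \<le> f 0 * exp (- (f 0 / p) * x)"
proof (rule ccontr)
  assume A: "\<not> ?thesis"
  define l where "l = f 0 / p"
  have l: "0 < l" using c p by (simp add: l_def)
  have x0: "x < 0" using A x by (cases "x = 0") auto
  have fx: "0 < f x" using A c x0 by (smt (verit) exp_gt_zero mult_pos_pos)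
  define k where "k = ln (f x / f 0) / (- x)"
  have "ln (f 0 * exp (- l * x)) < ln (f x)"
    using A c fx by (subst ln_less_cancel_iff) (auto simp: l_def)
  then have "ln (f 0) - l * x < ln (f x)" using c by (simp add: ln_mult)
  then have "l * (- x) < ln (f x / f 0)" using c fx by (simp add: ln_div)
  then have lk: "l < k" using x0 by (simp add: k_def field_simps)
  then have k: "0 < k" using l by simp
  have "ennreal p \<le> (\<integral>\<^sup>+y. ennreal (f 0 * exp (- k * y)) * indicator {0..} y \<partial>lborel)"
    unfolding P[symmetric]
  proof (intro nn_integral_mono)
    fix y :: real
    show "ennreal (f y * indicator {0..} y) \<le> ennreal (f 0 * exp (- k * y)) * indicator {0..} y"
      using LBy[OF lc c x0 fx, of y] unfolding k_def by (auto simp: indicator_def intro: ennreal_leI)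
  qed
  also have "\<dots> = ennreal (f 0 / k)" using exp_nn_integral[OF k] c by simp
  finally have "p \<le> f 0 / k" using c k by (subst (asm) ennreal_le_iff) auto
  moreover have "f 0 / k < f 0 / l" using c l lk by (intro divide_strict_left_mono) auto
  ultimately show False using p c by (simp add: l_def)
qed

lemma LB:
  assumes lc: "log_concave f" and fm[measurable]: "f \<in> borel_measurable borel" and c: "0 < f 0"
    and p: "0 < p" "p \<le> 1" and P: "(\<integral>\<^sup>+x. ennreal (f x * indicator {0..} x) \<partial>lborel) = ennreal p"
    and intQ: "integrable lborel (\<lambda>x. f x * indicator {..0} x)"
    and Q: "1 - p \<le> (\<integral>x. f x * indicator {..0} x \<partial>lborel)"
    and intN: "integrable lborel (\<lambda>x. f x * (- x) * indicator {..0} x)"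
  shows "p * (- ln p - 1 + p) / f 0 \<le> (\<integral>x. f x * (- x) * indicator {..0} x \<partial>lborel)"
proof -
  define l where "l = f 0 / p"
  have l: "0 < l" using c p by (simp add: l_def)
  define x0 where "x0 = ln p / l"
  have x0: "x0 \<le> 0" using p l by (simp add: x0_def divide_nonpos_pos)
  define g where "g x = f 0 * exp (- l * x)" for x
  have bound: "f x \<le> g x" if "x \<le> 0" for x
    using LB1[OF lc fm c p(1) P that] by (simp add: g_def l_def)
  have ex0: "exp (- l * x0) = 1 / p" using l p by (simp add: x0_def exp_minus inverse_eq_divide)
  have cl: "f 0 / l = p" using c p by (simp add: l_def)
  have I1: "has_bochner_integral lborel (\<lambda>x. (- x * g x) * indicator {x0..0} x)
      ((f 0 * exp (- l * 0) * (0 / l + 1 / l\<^sup>2)) - (f 0 * exp (- l * x0) * (x0 / l + 1 / l\<^sup>2)))"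
  proof (rule has_bochner_integral_FTC_Icc_nonneg)
    show "(\<lambda>x. - x * g x) \<in> borel_measurable borel" unfolding g_def by measurable
    fix x :: real assume "x \<in> {x0..0}"
    then show "0 \<le> - x * g x" using c unfolding g_def by (intro mult_nonneg_nonneg) auto
    show "DERIV (\<lambda>x. f 0 * exp (- l * x) * (x / l + 1 / l\<^sup>2)) x :> - x * g x"
      using l by (auto intro!: derivative_eq_intros simp: g_def field_simps power2_eq_square)
  qed (use x0 in auto)
  have I2: "has_bochner_integral lborel (\<lambda>x. g x * indicator {x0..0} x)
      ((- (f 0 / l) * exp (- l * 0)) - (- (f 0 / l) * exp (- l * x0)))"
  proof (rule has_bochner_integral_FTC_Icc_nonneg)
    show "g \<in> borel_measurable borel" unfolding g_def by measurable
    fix x :: real assume "x \<in> {x0..0}"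
    then show "0 \<le> g x" using c by (auto simp: g_def)
    show "DERIV (\<lambda>x. - (f 0 / l) * exp (- l * x)) x :> g x"
      using l by (auto intro!: derivative_eq_intros simp: g_def field_simps)
  qed (use x0 in auto)
  define v1 where "v1 = (f 0 * exp (- l * 0) * (0 / l + 1 / l\<^sup>2)) - (f 0 * exp (- l * x0) * (x0 / l + 1 / l\<^sup>2))"
  define v2 where "v2 = (- (f 0 / l) * exp (- l * 0)) - (- (f 0 / l) * exp (- l * x0))"
  have v2: "v2 = 1 - p" unfolding v2_def ex0 using cl p by (simp add: field_simps)
  have v1: "v1 = p * (- ln p - 1 + p) / f 0"
  proof -
    have "v1 = f 0 / l\<^sup>2 - (f 0 / p) * (x0 / l + 1 / l\<^sup>2)" unfolding v1_def ex0 by simp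
    also have "\<dots> = (p - 1 - ln p) / l"
      using l p c unfolding x0_def l_def by (simp add: field_simps power2_eq_square)
    also have "\<dots> = p * (- ln p - 1 + p) / f 0" using c p by (simp add: l_def field_simps)
    finally show ?thesis .
  qed
  have i1: "integrable lborel (\<lambda>x. (- x * g x) * indicator {x0..0} x)" by (rule integrable.intros[OF I1])
  have i2: "integrable lborel (\<lambda>x. g x * indicator {x0..0} x)" by (rule integrable.intros[OF I2])
  define s0 where "s0 = - x0"
  have s0: "0 \<le> s0" using x0 by (simp add: s0_def)
  have "(\<integral>x. (- x * g x) * indicator {x0..0} x + s0 * (f x * indicator {..0} x - g x * indicator {x0..0} x) \<partial>lborel)
      \<le> (\<integral>x. f x * (- x) * indicator {..0} x \<partial>lborel)"
  proof (rule integral_mono)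
    show "integrable lborel (\<lambda>x. (- x * g x) * indicator {x0..0} x + s0 * (f x * indicator {..0} x - g x * indicator {x0..0} x))"
      by (intro Bochner_Integration.integrable_add Bochner_Integration.integrable_mult_right Bochner_Integration.integrable_diff i1 i2 intQ)
    show "integrable lborel (\<lambda>x. f x * (- x) * indicator {..0} x)" by (rule intN)
    fix x :: real
    show "(- x * g x) * indicator {x0..0} x + s0 * (f x * indicator {..0} x - g x * indicator {x0..0} x)
       \<le> f x * (- x) * indicator {..0} x"
    proof (cases "x \<le> 0")
      case False then show ?thesis by (simp add: indicator_def)
    next
      case True
      show ?thesis
      proof (cases "x0 \<le> x")
        case True2: True
        have "0 \<le> (x0 - x) * (f x - g x)"
          using True2 bound[OF True] by (intro mult_nonpos_nonpos) auto
        then show ?thesis using True True2 by (simp add: indicator_def s0_def algebra_simps)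
      next
        case False2: False
        have "0 \<le> (x0 - x) * f x"
          using False2 lc_nonneg[OF lc] by (intro mult_nonneg_nonneg) auto
        then show ?thesis using True False2 by (simp add: indicator_def s0_def algebra_simps)
      qed
    qed
  qed
  moreover have "(\<integral>x. (- x * g x) * indicator {x0..0} x + s0 * (f x * indicator {..0} x - g x * indicator {x0..0} x) \<partial>lborel)
      = v1 + s0 * ((\<integral>x. f x * indicator {..0} x \<partial>lborel) - v2)"
  proof -
    have e1: "integral\<^sup>L lborel (\<lambda>x. (- x * g x) * indicator {x0..0} x) = v1"
      using I1 unfolding v1_def by (rule has_bochner_integral_integral_eq)
    have e2: "integral\<^sup>L lborel (\<lambda>x. g x * indicator {x0..0} x) = v2"
      using I2 unfolding v2_def by (rule has_bochner_integral_integral_eq)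
    have "(\<integral>x. (- x * g x) * indicator {x0..0} x + s0 * (f x * indicator {..0} x - g x * indicator {x0..0} x) \<partial>lborel)
       = integral\<^sup>L lborel (\<lambda>x. (- x * g x) * indicator {x0..0} x) + (\<integral>x. s0 * (f x * indicator {..0} x - g x * indicator {x0..0} x) \<partial>lborel)"
      by (intro Bochner_Integration.integral_add i1 Bochner_Integration.integrable_mult_right Bochner_Integration.integrable_diff i2 intQ)
    also have "(\<integral>x. s0 * (f x * indicator {..0} x - g x * indicator {x0..0} x) \<partial>lborel)
       = s0 * ((\<integral>x. f x * indicator {..0} x \<partial>lborel) - integral\<^sup>L lborel (\<lambda>x. g x * indicator {x0..0} x))"
      by (simp add: Bochner_Integration.integral_diff[OF intQ i2])
    finally show ?thesis unfolding e1 e2 .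
  qed
  moreover have "0 \<le> s0 * ((\<integral>x. f x * indicator {..0} x \<partial>lborel) - v2)"
    using s0 Q v2 by simp
  ultimately show ?thesis using v1 by linarith
qed

lemma lc_reflect:
  assumes lc: "log_concave f" shows "log_concave (\<lambda>x. f (- x))"
  unfolding log_concave_def
proof (intro conjI allI impI)
  fix x show "0 \<le> f (- x)" by (rule lc_nonneg[OF lc])
next
  fix t x y :: real
  assume t: "0 \<le> t \<and> t \<le> 1"
  have "f (- x) powr t * f (- y) powr (1 - t) \<le> f (t * (- x) + (1 - t) * (- y))" using lc_ineq[OF lc] t by blast
  then show "f (- x) powr t * f (- y) powr (1 - t) \<le> f (- (t * x + (1 - t) * y))" by (simp add: algebra_simps)
qed

lemma refl_int: "(\<integral>x. g (- x) \<partial>lborel) = (\<integral>x. g x \<partial>lborel)" for g :: "real \<Rightarrow> real"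
  using lborel_integral_real_affine[of "-1" g 0] by simp

lemma refl_integrable: "integrable lborel (\<lambda>x. g (- x)) \<longleftrightarrow> integrable lborel g" for g :: "real \<Rightarrow> real"
  using lborel_integrable_real_affine_iff[of "-1" g 0] by simp

lemma refl_nn: "g \<in> borel_measurable borel \<Longrightarrow> (\<integral>\<^sup>+x. g (- x) \<partial>lborel) = (\<integral>\<^sup>+x. g x \<partial>lborel)"
  for g :: "real \<Rightarrow> ennreal"
  using nn_integral_real_affine[of g "-1" 0] by simp

lemma alg:
  fixes c p A N :: real
  assumes c: "0 < c" and p: "0 < p" and A: "0 \<le> A" and cA: "c * A \<le> p * p"
    and N: "p * (- ln p - 1 + p) / c \<le> N"
  shows "A / p \<le> (1 / ln 2) * (A + N)"
proof -
  have L: "0 \<le> - ln p - 1 + p" using ln_le_minus_one[OF p] by simp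
  have Ap: "A / p \<le> p / c" using c p cA by (simp add: field_simps)
  have "(- ln p - 1 + p) * (A / p) \<le> (- ln p - 1 + p) * (p / c)"
    using Ap L by (rule mult_left_mono)
  also have "\<dots> = p * (- ln p - 1 + p) / c" by simp
  finally have N2: "(- ln p - 1 + p) * (A / p) \<le> N" using N by linarith
  have l2: "ln 2 \<le> 2 * p - 1 - ln p"
    using ln_le_minus_one[of "2 * p"] p by (simp add: ln_mult)
  have Ap0: "0 \<le> A / p" using A p by simp
  have "ln 2 * (A / p) \<le> (2 * p - 1 - ln p) * (A / p)" using l2 Ap0 by (rule mult_right_mono)
  also have "\<dots> = A + (- ln p - 1 + p) * (A / p)" using p by (simp add: field_simps)
  also have "\<dots> \<le> A + N" using N2 by simp
  finally have "ln 2 * (A / p) \<le> A + N" .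
  then show ?thesis by (simp add: field_simps)
qed

lemma Fin:
  assumes lc: "log_concave f" and fm[measurable]: "f \<in> borel_measurable borel" and c: "0 < f 0"
    and one: "(\<integral>\<^sup>+x. ennreal (f x) \<partial>lborel) = 1"
  shows "integrable lborel (\<lambda>x. f x * x * indicator {0..} x)"
proof (rule integrableI_nonneg)
  note nn = lc_nonneg[OF lc]
  show "(\<lambda>x. f x * x * indicator {0..} x) \<in> borel_measurable lborel" by measurable
  show "AE x in lborel. 0 \<le> f x * x * indicator {0..} x" using nn by (auto simp: indicator_def)
  have "(\<integral>\<^sup>+x. ennreal (f x * indicator {0..} x) \<partial>lborel) \<le> (\<integral>\<^sup>+x. ennreal (f x) \<partial>lborel)"
    by (intro nn_integral_mono) (auto simp: indicator_def)
  then have "(\<integral>\<^sup>+x. ennreal (f x * indicator {0..} x) \<partial>lborel) < top" using one by (simp add: le_less_trans)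
  then have "(\<integral>\<^sup>+x. ennreal (f x * indicator {0..} x) \<partial>lborel) * (\<integral>\<^sup>+x. ennreal (f x * indicator {0..} x) \<partial>lborel) < top"
    by (simp add: ennreal_mult_less_top)
  then have "ennreal (f 0) * (\<integral>\<^sup>+x. ennreal (f x * x * indicator {0..} x) \<partial>lborel) < top"
    using LA[OF lc fm] by (rule le_less_trans[rotated])
  then show "(\<integral>\<^sup>+x. ennreal (f x * x * indicator {0..} x) \<partial>lborel) < \<infinity>"
    using c by (force simp add: ennreal_mult_less_top)
qed

lemma H:
  assumes lc: "log_concave f" and fm[measurable]: "f \<in> borel_measurable borel" and c: "0 < f 0"
    and one: "(\<integral>\<^sup>+x. ennreal (f x) \<partial>lborel) = 1"
    and p: "0 < (\<integral>x. f x * indicator {0..} x \<partial>lborel)"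
    and intN: "integrable lborel (\<lambda>x. f x * (- x) * indicator {..0} x)"
  shows "(\<integral>x. f x * x * indicator {0..} x \<partial>lborel) / (\<integral>x. f x * indicator {0..} x \<partial>lborel)
     \<le> (1 / ln 2) * ((\<integral>x. f x * x * indicator {0..} x \<partial>lborel) + (\<integral>x. f x * (- x) * indicator {..0} x \<partial>lborel))"
proof -
  note nn = lc_nonneg[OF lc]
  define pp where "pp = (\<integral>x. f x * indicator {0..} x \<partial>lborel)"
  define A where "A = (\<integral>x. f x * x * indicator {0..} x \<partial>lborel)"
  define N where "N = (\<integral>x. f x * (- x) * indicator {..0} x \<partial>lborel)"
  have intf: "integrable lborel f"
    using one nn by (intro integrableI_nonneg) auto
  have f1: "(\<integral>x. f x \<partial>lborel) = 1"
    using nn_integral_eq_integral[OF intf] one nn by simp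
  have intP: "integrable lborel (\<lambda>x. f x * indicator {0..} x)"
    by (intro integrable_real_mult_indicator intf) auto
  have intQ: "integrable lborel (\<lambda>x. f x * indicator {..0} x)"
    by (intro integrable_real_mult_indicator intf) auto
  have intA: "integrable lborel (\<lambda>x. f x * x * indicator {0..} x)" by (rule Fin[OF lc fm c one])
  have EP: "(\<integral>\<^sup>+x. ennreal (f x * indicator {0..} x) \<partial>lborel) = ennreal pp"
    unfolding pp_def using nn by (intro nn_integral_eq_integral intP) (auto simp: indicator_def)
  have EA: "(\<integral>\<^sup>+x. ennreal (f x * x * indicator {0..} x) \<partial>lborel) = ennreal A"
    unfolding A_def using nn by (intro nn_integral_eq_integral intA) (auto simp: indicator_def)
  have A0: "0 \<le> A" unfolding A_def using nn by (intro integral_nonneg_AE) (auto simp: indicator_def)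
  have pp1: "pp \<le> 1" unfolding pp_def f1[symmetric]
    using nn by (intro integral_mono intP intf) (auto simp: indicator_def)
  have "1 \<le> pp + (\<integral>x. f x * indicator {..0} x \<partial>lborel)"
  proof -
    have "(\<integral>x. f x \<partial>lborel) \<le> (\<integral>x. f x * indicator {0..} x + f x * indicator {..0} x \<partial>lborel)"
      using nn by (intro integral_mono intf Bochner_Integration.integrable_add intP intQ) (auto simp: indicator_def)
    then show ?thesis unfolding pp_def f1 by (simp add: Bochner_Integration.integral_add[OF intP intQ])
  qed
  then have Q: "1 - pp \<le> (\<integral>x. f x * indicator {..0} x \<partial>lborel)" by simp
  have cA: "f 0 * A \<le> pp * pp"
  proof -
    have "ennreal (f 0) * ennreal A \<le> ennreal pp * ennreal pp" using LA[OF lc fm] unfolding EP EA .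
    then have "ennreal (f 0 * A) \<le> ennreal (pp * pp)" using c A0 p by (simp add: ennreal_mult pp_def)
    then show ?thesis using p by (simp add: ennreal_le_iff pp_def)
  qed
  have NB: "pp * (- ln pp - 1 + pp) / f 0 \<le> N"
    unfolding N_def by (rule LB[OF lc fm c _ pp1 EP intQ Q intN]) (use p pp_def in simp)
  show ?thesis using alg[OF c _ A0 cA NB] p unfolding pp_def A_def N_def by simp
qed

theorem lemma25:
  fixes M :: "'a measure" and X :: "'a \<Rightarrow> real" and f :: "real \<Rightarrow> real"
  assumes "prob_space M"
    and "log_concave f"
    and "distributed M lborel X (\<lambda>x. ennreal (f x))"
    and "measure M {\<omega> \<in> space M. X \<omega> \<ge> 0} > 0"
    and "measure M {\<omega> \<in> space M. X \<omega> \<le> 0} > 0"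
  shows "max ((\<integral>\<omega>. \<bar>X \<omega>\<bar> * indicator {\<omega> \<in> space M. X \<omega> \<le> 0} \<omega> \<partial>M)
                / measure M {\<omega> \<in> space M. X \<omega> \<le> 0})
             ((\<integral>\<omega>. \<bar>X \<omega>\<bar> * indicator {\<omega> \<in> space M. X \<omega> \<ge> 0} \<omega> \<partial>M)
                / measure M {\<omega> \<in> space M. X \<omega> \<ge> 0})
         \<le> (1 / ln 2) * (\<integral>\<omega>. \<bar>X \<omega>\<bar> \<partial>M)"
proof -
  interpret prob_space M by fact
  note lc = assms(2) and D = assms(3)
  note nn = lc_nonneg[OF lc]
  have fm[measurable]: "f \<in> borel_measurable borel"
    using distributed_real_measurable[OF _ D] nn by simp
  have Xm[measurable]: "X \<in> borel_measurable M" using distributed_measurable[OF D] by simp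
  have one: "(\<integral>\<^sup>+x. ennreal (f x) \<partial>lborel) = 1"
  proof -
    have "emeasure M (X -` UNIV \<inter> space M) = (\<integral>\<^sup>+x. ennreal (f x) * indicator UNIV x \<partial>lborel)"
      by (rule distributed_emeasure[OF D]) simp
    then show ?thesis by (simp add: emeasure_space_1)
  qed
  have intf: "integrable lborel f"
    using one nn by (intro integrableI_nonneg) auto
  have meas: "measure M {\<omega> \<in> space M. X \<omega> \<in> S} = (\<integral>x. f x * indicator S x \<partial>lborel)"
    if S: "S \<in> sets borel" for S
  proof -
    have int: "integrable lborel (\<lambda>x. f x * indicator S x)"
      by (intro integrable_real_mult_indicator intf) (use S in auto)
    have "{\<omega> \<in> space M. X \<omega> \<in> S} = X -` S \<inter> space M" by auto
    then have "emeasure M {\<omega> \<in> space M. X \<omega> \<in> S} = (\<integral>\<^sup>+x. ennreal (f x) * indicator S x \<partial>lborel)"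
      using distributed_emeasure[OF D, of S] S by simp
    also have "\<dots> = (\<integral>\<^sup>+x. ennreal (f x * indicator S x) \<partial>lborel)"
      by (intro nn_integral_cong) (auto simp: indicator_def)
    also have "\<dots> = ennreal (\<integral>x. f x * indicator S x \<partial>lborel)"
      using nn by (intro nn_integral_eq_integral int) (auto simp: indicator_def)
    finally show ?thesis
      using nn by (simp add: measure_def integral_nonneg_AE indicator_def)
  qed
  define hP where "hP x = f x * indicator {0..} x" for x :: real
  define hQ where "hQ x = f x * indicator {..0} x" for x :: real
  define hA where "hA x = f x * x * indicator {0..} x" for x :: real
  define hN where "hN x = f x * (- x) * indicator {..0} x" for x :: real
  have mP: "measure M {\<omega> \<in> space M. X \<omega> \<ge> 0} = (\<integral>x. hP x \<partial>lborel)"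
    using meas[of "{0..}"] unfolding hP_def by simp
  have mQ: "measure M {\<omega> \<in> space M. X \<omega> \<le> 0} = (\<integral>x. hQ x \<partial>lborel)"
    using meas[of "{..0}"] unfolding hQ_def by simp
  have p: "0 < (\<integral>x. hP x \<partial>lborel)" using assms(4) mP by simp
  have q: "0 < (\<integral>x. hQ x \<partial>lborel)" using assms(5) mQ by simp
  have "\<exists>y>0. 0 < f y"
  proof (rule ccontr)
    assume nt: "\<not> ?thesis"
    have "AE x in lborel. hP x = 0"
      using AE_lborel_singleton[of 0]
    proof (rule eventually_mono)
      fix x :: real assume "x \<noteq> 0"
      then show "hP x = 0" using nt nn[of x] by (cases "x > 0") (auto simp: hP_def indicator_def)
    qed
    then have "(\<integral>x. hP x \<partial>lborel) = 0" by (simp add: integral_eq_zero_AE)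
    then show False using p by simp
  qed
  then obtain y where y: "0 < y" "0 < f y" by blast
  have "\<exists>x<0. 0 < f x"
  proof (rule ccontr)
    assume nt: "\<not> ?thesis"
    have "AE x in lborel. hQ x = 0"
      using AE_lborel_singleton[of 0]
    proof (rule eventually_mono)
      fix x :: real assume "x \<noteq> 0"
      then show "hQ x = 0" using nt nn[of x] by (cases "x < 0") (auto simp: hQ_def indicator_def)
    qed
    then have "(\<integral>x. hQ x \<partial>lborel) = 0" by (simp add: integral_eq_zero_AE)
    then show False using q by simp
  qed
  then obtain x where x: "x < 0" "0 < f x" by blast
  have c: "0 < f 0"
  proof -
    define t where "t = y / (y - x)"
    have t: "0 \<le> t" "t \<le> 1" using x y by (auto simp: t_def field_simps)
    have e: "t * x + (1 - t) * y = 0" using x y by (simp add: t_def field_simps)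
    have "f x powr t * f y powr (1 - t) \<le> f 0" using lc_ineq[OF lc t, of x y] unfolding e .
    moreover have "0 < f x powr t * f y powr (1 - t)" using x y by simp
    ultimately show ?thesis by simp
  qed
  define g where "g x = f (- x)" for x
  have lcg: "log_concave g" unfolding g_def by (rule lc_reflect[OF lc])
  have gm[measurable]: "g \<in> borel_measurable borel" unfolding g_def by measurable
  have g0: "g 0 = f 0" by (simp add: g_def)
  have oneg: "(\<integral>\<^sup>+x. ennreal (g x) \<partial>lborel) = 1"
    unfolding g_def using refl_nn[of "\<lambda>x. ennreal (f x)"] one by simp
  have gP: "(\<lambda>x. g x * indicator {0..} x) = (\<lambda>x. hQ (- x))"
    by (auto simp: g_def hQ_def indicator_def)
  have gQ: "(\<lambda>x. g x * indicator {..0} x) = (\<lambda>x. hP (- x))"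
    by (auto simp: g_def hP_def indicator_def)
  have gA: "(\<lambda>x. g x * x * indicator {0..} x) = (\<lambda>x. hN (- x))"
    by (auto simp: g_def hN_def indicator_def)
  have gN: "(\<lambda>x. g x * (- x) * indicator {..0} x) = (\<lambda>x. hA (- x))"
    by (auto simp: g_def hA_def indicator_def)
  have intA: "integrable lborel hA" unfolding hA_def by (rule Fin[OF lc fm c one])
  have intN: "integrable lborel hN"
    using Fin[OF lcg gm _ oneg] c g0 unfolding gA refl_integrable by simp
  have H1: "(\<integral>x. hA x \<partial>lborel) / (\<integral>x. hP x \<partial>lborel) \<le> (1 / ln 2) * ((\<integral>x. hA x \<partial>lborel) + (\<integral>x. hN x \<partial>lborel))"
    using H[OF lc fm c one] p intN unfolding hA_def hP_def hN_def by simp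
  have H2: "(\<integral>x. hN x \<partial>lborel) / (\<integral>x. hQ x \<partial>lborel) \<le> (1 / ln 2) * ((\<integral>x. hN x \<partial>lborel) + (\<integral>x. hA x \<partial>lborel))"
    using H[OF lcg gm _ oneg] c g0 q intA unfolding gP gA gN refl_int refl_integrable by simp
  have E1: "(\<integral>\<omega>. \<bar>X \<omega>\<bar> * indicator {\<omega> \<in> space M. X \<omega> \<le> 0} \<omega> \<partial>M) = (\<integral>x. hN x \<partial>lborel)"
  proof -
    have "(\<integral>\<omega>. \<bar>X \<omega>\<bar> * indicator {\<omega> \<in> space M. X \<omega> \<le> 0} \<omega> \<partial>M) = (\<integral>\<omega>. \<bar>X \<omega>\<bar> * indicator {..0} (X \<omega>) \<partial>M)"
      by (intro Bochner_Integration.integral_cong) (auto simp: indicator_def)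
    also have "\<dots> = (\<integral>x. f x * (\<bar>x\<bar> * indicator {..0} x) \<partial>lborel)"
      by (rule distributed_integral[OF D, symmetric]) (auto simp: nn)
    also have "\<dots> = (\<integral>x. hN x \<partial>lborel)"
      by (intro Bochner_Integration.integral_cong) (auto simp: hN_def indicator_def)
    finally show ?thesis .
  qed
  have E2: "(\<integral>\<omega>. \<bar>X \<omega>\<bar> * indicator {\<omega> \<in> space M. X \<omega> \<ge> 0} \<omega> \<partial>M) = (\<integral>x. hA x \<partial>lborel)"
  proof -
    have "(\<integral>\<omega>. \<bar>X \<omega>\<bar> * indicator {\<omega> \<in> space M. X \<omega> \<ge> 0} \<omega> \<partial>M) = (\<integral>\<omega>. \<bar>X \<omega>\<bar> * indicator {0..} (X \<omega>) \<partial>M)"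
      by (intro Bochner_Integration.integral_cong) (auto simp: indicator_def)
    also have "\<dots> = (\<integral>x. f x * (\<bar>x\<bar> * indicator {0..} x) \<partial>lborel)"
      by (rule distributed_integral[OF D, symmetric]) (auto simp: nn)
    also have "\<dots> = (\<integral>x. hA x \<partial>lborel)"
      by (intro Bochner_Integration.integral_cong) (auto simp: hA_def indicator_def)
    finally show ?thesis .
  qed
  have E: "(\<integral>\<omega>. \<bar>X \<omega>\<bar> \<partial>M) = (\<integral>x. hA x \<partial>lborel) + (\<integral>x. hN x \<partial>lborel)"
  proof -
    have "(\<integral>\<omega>. \<bar>X \<omega>\<bar> \<partial>M) = (\<integral>x. f x * \<bar>x\<bar> \<partial>lborel)"
      by (rule distributed_integral[OF D, symmetric]) (auto simp: nn)
    also have "\<dots> = (\<integral>x. hA x + hN x \<partial>lborel)"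
      by (intro Bochner_Integration.integral_cong) (auto simp: hA_def hN_def indicator_def)
    also have "\<dots> = (\<integral>x. hA x \<partial>lborel) + (\<integral>x. hN x \<partial>lborel)"
      by (rule Bochner_Integration.integral_add[OF intA intN])
    finally show ?thesis .
  qed
  show ?thesis unfolding E1 E2 E mP mQ using H1 H2 by (simp add: add.commute)
qed

end
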